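(* Let $n\ge 1$ and $0\le r\le n$, and let $G_{n,r}$ be the simple graph on $V=\{0,1,\ldots,n\}$ obtained from the complete graph $K_{n+1}$ by deleting the $r$ edges $\{0,i\}$ for $n-r+1\le i\le n$. Then $\dim_{\mathbb K}\left(R_n/\mathcal{M}_{G_{n,r}}^{(1)}\right)=\det\left(\widetilde Q_{G_{n,r}}\right)$.
   Context: $\mathbb K$ is a field, $R_n=\mathbb K[x_1,\ldots,x_n]$. For a loopless multigraph $G$ on $V=\{0,1,\ldots,n\}$ with adjacency matrix $[a_{ij}]_{0\le i,j\le n}$ ($a_{ij}=a_{ji}$ = number of edges between $i$ and $j$, $a_{ii}=0$), and $\emptyset\ne A\subseteq[n]$, put $d_A(i)=\sum_{j\in V\setminus A}a_{ij}$ for $i\in A$, and $m_A=\prod_{i\in A}x_i^{d_A(i)}$. The $1$-skeleton ideal is $\mathcal{M}_G^{(1)}=\langle m_A:\emptyset\ne A\subseteq[n],\ |A|\le 2\rangle\subseteq R_n$. Writing $d_i=\sum_{j\in V}a_{ij}$, the truncated signless Laplace matrix $\widetilde Q_G$ is the $n\times n$ matrix with entries $(\widetilde Q_G)_{ii}=d_i$ and $(\widetilde Q_G)_{ij}=a_{ij}$ for $i\ne j$, $i,j\in[n]$ (i.e. $D+A(G)$ with row and column of the root $0$ deleted). *)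

theory Defs
  imports "HOL-Library.Poly_Mapping" "HOL-Library.Extended_Nat" "Jordan_Normal_Form.Determinant"
begin

text \<open>Polynomials in the variables x_i (i :: nat) over a field are modelled as
  finitely supported maps from exponent vectors (nat to nat, finite support) to coefficients.\<close>

type_synonym 'k mpoly = "(nat \<Rightarrow>\<^sub>0 nat) \<Rightarrow>\<^sub>0 'k"

definition R :: "nat \<Rightarrow> 'k::field mpoly set" where
  "R n = {p. \<forall>m \<in> Poly_Mapping.keys p. Poly_Mapping.keys m \<subseteq> {1..n}}"

definition smult_mp :: "'k::field \<Rightarrow> 'k mpoly \<Rightarrow> 'k mpoly" where
  "smult_mp c p = Poly_Mapping.single 0 c * p"

definition ideal_gen :: "nat \<Rightarrow> 'k::field mpoly set \<Rightarrow> 'k mpoly set" where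
  "ideal_gen n Gs = {p. \<exists>q. (\<forall>g\<in>Gs. q g \<in> R n) \<and> p = (\<Sum>g\<in>Gs. q g * g)}"

text \<open>A finite set S of elements of R_n is linearly independent modulo I,
  i.e. its image in R_n / I is linearly independent (and injective).\<close>
definition indep_mod :: "nat \<Rightarrow> 'k::field mpoly set \<Rightarrow> 'k mpoly set \<Rightarrow> bool" where
  "indep_mod n I S \<longleftrightarrow> finite S \<and> S \<subseteq> R n \<and>
     (\<forall>c. (\<Sum>s\<in>S. smult_mp (c s) s) \<in> I \<longrightarrow> (\<forall>s\<in>S. c s = 0))"

text \<open>dim_K (R_n / I), as an extended natural (\<infinity> if infinite-dimensional).\<close>
definition quot_dim :: "nat \<Rightarrow> 'k::field mpoly set \<Rightarrow> enat" where
  "quot_dim n I = Sup {enat (card S) | S. indep_mod n I S}"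

text \<open>Multigraph on {0..n} given by its adjacency function a (only used on {0..n}).\<close>
definition dA :: "nat \<Rightarrow> (nat \<Rightarrow> nat \<Rightarrow> nat) \<Rightarrow> nat set \<Rightarrow> nat \<Rightarrow> nat" where
  "dA n a A i = (\<Sum>j\<in>{0..n} - A. a i j)"

definition mA :: "nat \<Rightarrow> (nat \<Rightarrow> nat \<Rightarrow> nat) \<Rightarrow> nat set \<Rightarrow> 'k::field mpoly" where
  "mA n a A = Poly_Mapping.single (\<Sum>i\<in>A. Poly_Mapping.single i (dA n a A i)) 1"

definition skeleton1_gens :: "nat \<Rightarrow> (nat \<Rightarrow> nat \<Rightarrow> nat) \<Rightarrow> 'k::field mpoly set" where
  "skeleton1_gens n a = {mA n a A | A. A \<noteq> {} \<and> A \<subseteq> {1..n} \<and> card A \<le> 2}"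

definition skeleton1_ideal :: "nat \<Rightarrow> (nat \<Rightarrow> nat \<Rightarrow> nat) \<Rightarrow> 'k::field mpoly set" where
  "skeleton1_ideal n a = ideal_gen n (skeleton1_gens n a)"

text \<open>Truncated signless Laplacian; row/column k (0-based) corresponds to vertex k+1.\<close>
definition trunc_Q :: "nat \<Rightarrow> (nat \<Rightarrow> nat \<Rightarrow> nat) \<Rightarrow> int mat" where
  "trunc_Q n a = mat n n (\<lambda>(k, l). if k = l then int (\<Sum>j\<in>{0..n}. a (k+1) j)
                                    else int (a (k+1) (l+1)))"

definition Gnr :: "nat \<Rightarrow> nat \<Rightarrow> nat \<Rightarrow> nat \<Rightarrow> nat" where
  "Gnr n r i j = (if i = j then 0
                  else if (i = 0 \<and> n - r + 1 \<le> j) \<or> (j = 0 \<and> n - r + 1 \<le> i) then 0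
                  else 1)"

end

theory Submission
  imports Defs
begin


lemma lookup_smult_mp: "Poly_Mapping.lookup (smult_mp c p) k = c * Poly_Mapping.lookup p k"
  unfolding smult_mp_def mult_map_scale_conv_mult[symmetric]
  by transfer (simp add: when_def)

lemma vs_smult_mp: "vector_space (smult_mp :: 'k::field \<Rightarrow> 'k mpoly \<Rightarrow> 'k mpoly)"
  by unfold_locales (auto intro!: poly_mapping_eqI simp: lookup_smult_mp lookup_add algebra_simps)

lemma lookup_mult_single_notdvd:
  fixes q :: "'k::field mpoly"
  assumes "\<not> (\<exists>a. b = a + m)"
  shows "Poly_Mapping.lookup (q * Poly_Mapping.single m 1) b = 0"
proof -
  have h: "(\<Sum>qa. (Poly_Mapping.lookup (Poly_Mapping.single m (1::'k)) qa when b = l + qa)) = (0::'k)" for l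
  proof -
    have "(\<lambda>qa. (Poly_Mapping.lookup (Poly_Mapping.single m (1::'k)) qa when b = l + qa)) = (\<lambda>_. 0)"
      using assms by (intro ext) (auto simp: lookup_single when_def)
    then show ?thesis by (simp only: Sum_any.neutral)
  qed
  show ?thesis by (simp add: lookup_mult h)
qed

lemma lookup_sum_single:
  assumes "finite B"
  shows "Poly_Mapping.lookup (\<Sum>b\<in>B. Poly_Mapping.single b (f b)) k = (if k \<in> B then f k else (0::'a::comm_monoid_add))"
  using assms by (simp add: lookup_sum lookup_single when_def)

lemma poly_expand: "(p :: 'k::field mpoly) = (\<Sum>b\<in>Poly_Mapping.keys p. Poly_Mapping.single b (Poly_Mapping.lookup p b))"
  by (rule poly_mapping_eqI) (auto simp: lookup_sum_single in_keys_iff)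

definition mono1 :: "(nat \<Rightarrow>\<^sub>0 nat) \<Rightarrow> 'k::field mpoly" where
  "mono1 b = Poly_Mapping.single b 1"

definition stdm :: "nat \<Rightarrow> (nat \<Rightarrow>\<^sub>0 nat) set \<Rightarrow> (nat \<Rightarrow>\<^sub>0 nat) set" where
  "stdm n Ms = {b. Poly_Mapping.keys b \<subseteq> {1..n} \<and> (\<forall>m\<in>Ms. \<not> (\<exists>a. b = a + m))}"

lemma R_add: "p \<in> R n \<Longrightarrow> q \<in> R n \<Longrightarrow> p + q \<in> R n"
  unfolding R_def using keys_add[of p q] by blast

lemma R_zero: "0 \<in> R n"
  unfolding R_def by simp

lemma R_sum: "(\<And>x. x \<in> A \<Longrightarrow> f x \<in> R n) \<Longrightarrow> sum f A \<in> R n"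
  by (induction A rule: infinite_finite_induct) (auto simp: R_zero R_add)

lemma keys_smult_mp: "Poly_Mapping.keys (smult_mp c p) \<subseteq> Poly_Mapping.keys p"
  by (auto simp: in_keys_iff lookup_smult_mp)

lemma R_smult: "p \<in> R n \<Longrightarrow> smult_mp c p \<in> R n"
  unfolding R_def using keys_smult_mp[of c p] by blast

lemma R_single: "Poly_Mapping.keys b \<subseteq> {1..n} \<Longrightarrow> Poly_Mapping.single b c \<in> R n"
  unfolding R_def by auto

lemma ideal_zero: "0 \<in> ideal_gen n Gs"
  unfolding ideal_gen_def by (rule CollectI, rule exI[of _ "\<lambda>_. 0"]) (simp add: R_zero)

lemma ideal_add: "p \<in> ideal_gen n Gs \<Longrightarrow> p' \<in> ideal_gen n Gs \<Longrightarrow> p + p' \<in> ideal_gen n Gs"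
proof -
  assume "p \<in> ideal_gen n Gs" "p' \<in> ideal_gen n Gs"
  then obtain q q' where q: "\<forall>g\<in>Gs. q g \<in> R n" "p = (\<Sum>g\<in>Gs. q g * g)"
    and q': "\<forall>g\<in>Gs. q' g \<in> R n" "p' = (\<Sum>g\<in>Gs. q' g * g)"
    unfolding ideal_gen_def by blast
  have "p + p' = (\<Sum>g\<in>Gs. (q g + q' g) * g)"
    by (simp add: q q' distrib_right sum.distrib)
  moreover have "\<forall>g\<in>Gs. q g + q' g \<in> R n" using q q' R_add by blast
  ultimately show ?thesis unfolding ideal_gen_def by (intro CollectI exI[of _ "\<lambda>g. q g + q' g"]) simp
qed

lemma ideal_sum: "(\<And>x. x \<in> A \<Longrightarrow> f x \<in> ideal_gen n Gs) \<Longrightarrow> sum f A \<in> ideal_gen n Gs"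
  by (induction A rule: infinite_finite_induct) (auto simp: ideal_zero ideal_add)

lemma ideal_gen_mult:
  assumes "finite Gs" "g \<in> Gs" "r \<in> R n"
  shows "r * g \<in> ideal_gen n Gs"
proof -
  have "(\<Sum>g'\<in>Gs. (if g' = g then r else 0) * g') = (\<Sum>g'\<in>Gs. if g' = g then r * g' else 0)"
    by (rule sum.cong) auto
  also have "\<dots> = r * g" using assms by simp
  finally show ?thesis unfolding ideal_gen_def using assms R_zero
    by (intro CollectI exI[of _ "\<lambda>g'. if g' = g then r else 0"]) auto
qed

lemma ideal_lookup_std:
  assumes "p \<in> ideal_gen n ((\<lambda>m. Poly_Mapping.single m (1::'k::field)) ` Ms)" "b \<in> stdm n Ms"
  shows "Poly_Mapping.lookup p b = 0"
proof -
  obtain q where p: "p = (\<Sum>g\<in>(\<lambda>m. Poly_Mapping.single m (1::'k)) ` Ms. q g * g)"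
    using assms(1) unfolding ideal_gen_def by blast
  have "Poly_Mapping.lookup (q g * g) b = 0" if g: "g \<in> (\<lambda>m. Poly_Mapping.single m (1::'k)) ` Ms" for g
  proof -
    obtain m where "m \<in> Ms" "g = Poly_Mapping.single m 1" using g by blast
    moreover have "\<not> (\<exists>a. b = a + m)" using assms(2) \<open>m \<in> Ms\<close> unfolding stdm_def by blast
    ultimately show ?thesis by (simp add: lookup_mult_single_notdvd)
  qed
  then show ?thesis by (simp add: p lookup_sum)
qed

lemma keys_add_nat: "Poly_Mapping.keys (a :: nat \<Rightarrow>\<^sub>0 nat) \<subseteq> Poly_Mapping.keys (a + m)"
  by (auto simp: in_keys_iff lookup_add)

definition Tproj :: "(nat \<Rightarrow>\<^sub>0 nat) set \<Rightarrow> 'k::field mpoly \<Rightarrow> 'k mpoly" where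
  "Tproj B p = (\<Sum>b\<in>B. Poly_Mapping.single b (Poly_Mapping.lookup p b))"

lemma lookup_Tproj: "finite B \<Longrightarrow> Poly_Mapping.lookup (Tproj B p) k = (if k \<in> B then Poly_Mapping.lookup p k else 0)"
  unfolding Tproj_def by (simp add: lookup_sum_single)

lemma reduce:
  assumes "finite Ms" "finite (stdm n Ms)" "p \<in> R n"
  shows "p - Tproj (stdm n Ms) p \<in> ideal_gen n ((\<lambda>m. Poly_Mapping.single m (1::'k::field)) ` Ms)"
proof -
  let ?S = "stdm n Ms"
  let ?I = "ideal_gen n ((\<lambda>m. Poly_Mapping.single m (1::'k::field)) ` Ms)"
  have eq: "p - Tproj ?S p = (\<Sum>b\<in>Poly_Mapping.keys p - ?S. Poly_Mapping.single b (Poly_Mapping.lookup p b))"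
    by (rule poly_mapping_eqI) (auto simp: lookup_minus lookup_Tproj assms(2) lookup_sum_single in_keys_iff)
  have "Poly_Mapping.single b (Poly_Mapping.lookup p b) \<in> ?I" if b: "b \<in> Poly_Mapping.keys p - ?S" for b
  proof -
    have kb: "Poly_Mapping.keys b \<subseteq> {1..n}" using b assms(3) unfolding R_def by blast
    then have "\<exists>m\<in>Ms. \<exists>a. b = a + m" using b unfolding stdm_def by auto
    then obtain m a where m: "m \<in> Ms" "b = a + m" by blast
    have "Poly_Mapping.single b (Poly_Mapping.lookup p b) = Poly_Mapping.single a (Poly_Mapping.lookup p b) * Poly_Mapping.single m 1"
      by (simp add: mult_single m(2))
    moreover have "Poly_Mapping.single a (Poly_Mapping.lookup p b) \<in> R n"
      using kb keys_add_nat[of a m] m(2) by (intro R_single) auto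
    ultimately show ?thesis using m(1) assms(1) by (auto intro!: ideal_gen_mult)
  qed
  then show ?thesis unfolding eq by (rule ideal_sum)
qed


lemma single_smult: "Poly_Mapping.single b c = smult_mp c (Poly_Mapping.single b (1::'k::field))"
  by (rule poly_mapping_eqI) (simp add: lookup_smult_mp lookup_single when_def)

lemma lookup_mono1: "Poly_Mapping.lookup (mono1 b :: 'k::field mpoly) k = (if b = k then 1 else 0)"
  unfolding mono1_def by (simp add: lookup_single when_def)

lemma inj_mono1: "inj (mono1 :: _ \<Rightarrow> 'k::field mpoly)"
proof (rule injI)
  fix x y assume "(mono1 x :: 'k mpoly) = mono1 y"
  then have "Poly_Mapping.lookup (mono1 x :: 'k mpoly) x = Poly_Mapping.lookup (mono1 y :: 'k mpoly) x" by simp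
  then show "x = y" by (simp add: lookup_mono1 split: if_splits)
qed

lemma lower_indep:
  assumes "finite (stdm n Ms)"
  shows "indep_mod n (ideal_gen n ((\<lambda>m. Poly_Mapping.single m (1::'k::field)) ` Ms)) (mono1 ` stdm n Ms)"
  unfolding indep_mod_def
proof (intro conjI allI impI ballI)
  let ?S = "stdm n Ms"
  show "finite (mono1 ` ?S :: 'k mpoly set)" using assms by simp
  show "(mono1 ` ?S :: 'k mpoly set) \<subseteq> R n"
    unfolding mono1_def stdm_def by (auto intro!: R_single)
  fix c s
  assume mem: "(\<Sum>s\<in>mono1 ` ?S. smult_mp (c s) s) \<in> ideal_gen n ((\<lambda>m. Poly_Mapping.single m (1::'k)) ` Ms)"
    and s: "s \<in> (mono1 ` ?S :: 'k mpoly set)"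
  obtain b where b: "b \<in> ?S" "s = mono1 b" using s by blast
  have "Poly_Mapping.lookup (\<Sum>s\<in>mono1 ` ?S. smult_mp (c s) s) b = (\<Sum>b'\<in>?S. c (mono1 b') * Poly_Mapping.lookup (mono1 b' :: 'k mpoly) b)"
    by (simp add: lookup_sum lookup_smult_mp sum.reindex[OF inj_on_subset[OF inj_mono1]])
  also have "\<dots> = (\<Sum>b'\<in>?S. if b' = b then c (mono1 b') else 0)"
    by (rule sum.cong) (auto simp: lookup_mono1)
  also have "\<dots> = c s" using assms b by simp
  finally show "c s = 0" using ideal_lookup_std[OF mem b(1)] by simp
qed

interpretation V: vector_space "smult_mp :: 'k::field \<Rightarrow> 'k mpoly \<Rightarrow> 'k mpoly"
  by (rule vs_smult_mp)

lemma lookup_Tproj_smult_sum: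
  assumes "finite B"
  shows "Tproj B (\<Sum>s\<in>S. smult_mp (c s) s) = (\<Sum>s\<in>S. smult_mp (c s) (Tproj B (s :: 'k::field mpoly)))"
  by (rule poly_mapping_eqI) (simp add: lookup_Tproj[OF assms] lookup_sum lookup_smult_mp sum_distrib_left)

lemma upper_bound:
  assumes fin: "finite Ms" "finite (stdm n Ms)"
    and ind: "indep_mod n (ideal_gen n ((\<lambda>m. Poly_Mapping.single m (1::'k::field)) ` Ms)) S"
  shows "card S \<le> card (stdm n Ms)"
proof -
  let ?B = "stdm n Ms"
  let ?I = "ideal_gen n ((\<lambda>m. Poly_Mapping.single m (1::'k::field)) ` Ms)"
  let ?T = "Tproj ?B :: 'k mpoly \<Rightarrow> 'k mpoly"
  have finS: "finite S" and SR: "S \<subseteq> R n"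
    and indc: "\<And>c. (\<Sum>s\<in>S. smult_mp (c s) s) \<in> ?I \<Longrightarrow> \<forall>s\<in>S. c s = 0"
    using ind unfolding indep_mod_def by auto
  have key: "\<forall>s\<in>S. c s = 0" if z: "(\<Sum>s\<in>S. smult_mp (c s) (?T s)) = 0" for c
  proof -
    let ?P = "\<Sum>s\<in>S. smult_mp (c s) s"
    have PR: "?P \<in> R n" using SR by (auto intro!: R_sum R_smult)
    have "?T ?P = 0" by (simp only: lookup_Tproj_smult_sum[OF fin(2)] z)
    then have "?P \<in> ?I" using reduce[OF fin PR] by simp
    then show ?thesis by (rule indc)
  qed
  have inj: "inj_on ?T S"
  proof (rule inj_onI, rule ccontr)
    fix s1 s2 assume s: "s1 \<in> S" "s2 \<in> S" "?T s1 = ?T s2" "s1 \<noteq> s2"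
    define c where "c = (\<lambda>s. if s = s1 then (1::'k) else if s = s2 then -1 else 0)"
    have "(\<Sum>s\<in>S. smult_mp (c s) (?T s)) = (\<Sum>s\<in>{s1,s2}. smult_mp (c s) (?T s))"
      using s finS by (intro sum.mono_neutral_right) (auto simp: c_def V.scale_zero_left)
    also have "\<dots> = 0" using s by (simp add: c_def V.scale_minus_left)
    finally have "\<forall>s\<in>S. c s = 0" by (rule key)
    then have "c s1 = 0" using s(1) by blast
    then show False by (simp add: c_def)
  qed
  have indT: "\<not> V.dependent (?T ` S)"
  proof
    assume "V.dependent (?T ` S)"
    then obtain t u where t: "finite t" "t \<subseteq> ?T ` S" "(\<Sum>v\<in>t. smult_mp (u v) v) = 0" "\<exists>v\<in>t. u v \<noteq> 0"
      unfolding V.dependent_explicit by blast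
    define c where "c = (\<lambda>s. if ?T s \<in> t then u (?T s) else 0)"
    let ?S' = "{s\<in>S. ?T s \<in> t}"
    have "(\<Sum>s\<in>S. smult_mp (c s) (?T s)) = (\<Sum>s\<in>?S'. smult_mp (c s) (?T s))"
      using finS by (intro sum.mono_neutral_right) (auto simp: c_def V.scale_zero_left)
    also have "\<dots> = (\<Sum>s\<in>?S'. smult_mp (u (?T s)) (?T s))"
      by (rule sum.cong) (auto simp: c_def)
    also have "\<dots> = (\<Sum>v\<in>?T ` ?S'. smult_mp (u v) v)"
      by (rule sum.reindex[symmetric, unfolded comp_def]) (rule inj_on_subset[OF inj], auto)
    also have "?T ` ?S' = t" using t(2) by auto
    finally have "\<forall>s\<in>S. c s = 0" using t(3) by (intro key) simp
    moreover obtain v where v: "v \<in> t" "u v \<noteq> 0" using t(4) by blast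
    moreover obtain s where "s \<in> S" "v = ?T s" using v(1) t(2) by blast
    ultimately show False unfolding c_def by (metis (mono_tags, lifting))
  qed
  have span: "?T ` S \<subseteq> V.span (mono1 ` ?B)"
  proof
    fix v assume "v \<in> ?T ` S"
    then obtain s where v: "v = ?T s" by blast
    have "?T s = (\<Sum>b\<in>?B. smult_mp (Poly_Mapping.lookup s b) (mono1 b))"
      unfolding Tproj_def mono1_def by (rule sum.cong, simp, rule single_smult)
    also have "\<dots> \<in> V.span (mono1 ` ?B)"
      by (intro V.span_sum V.span_scale V.span_base) auto
    finally show "v \<in> V.span (mono1 ` ?B)" using v by simp
  qed
  have "card (?T ` S) \<le> card (mono1 ` ?B :: 'k mpoly set)"
    using V.independent_span_bound[OF _ indT span] fin(2) by simp
  also have "\<dots> = card ?B" by (rule card_image[OF inj_on_subset[OF inj_mono1]]) simp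
  finally show ?thesis using card_image[OF inj] by simp
qed

theorem quot_dim_monomial:
  assumes "finite Ms" "finite (stdm n Ms)"
  shows "quot_dim n (ideal_gen n ((\<lambda>m. Poly_Mapping.single m (1::'k::field)) ` Ms)) = enat (card (stdm n Ms))"
  unfolding quot_dim_def
proof (rule antisym)
  let ?I = "ideal_gen n ((\<lambda>m. Poly_Mapping.single m (1::'k)) ` Ms)"
  show "Sup {enat (card S) |S. indep_mod n ?I S} \<le> enat (card (stdm n Ms))"
  proof (rule Sup_least)
    fix x assume "x \<in> {enat (card S) |S. indep_mod n ?I S}"
    then obtain S where "x = enat (card S)" "indep_mod n ?I S" by blast
    then show "x \<le> enat (card (stdm n Ms))" using upper_bound[OF assms] by simp
  qed
  have cd: "card (mono1 ` stdm n Ms :: 'k mpoly set) = card (stdm n Ms)"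
    by (rule card_image[OF inj_on_subset[OF inj_mono1]]) simp
  have "enat (card (stdm n Ms)) \<in> {enat (card S) |S. indep_mod n ?I S}"
    by (rule CollectI, rule exI[of _ "mono1 ` stdm n Ms"]) (simp add: cd lower_indep[OF assms(2)])
  then show "enat (card (stdm n Ms)) \<le> Sup {enat (card S) |S. indep_mod n ?I S}"
    by (rule Sup_upper)
qed



definition Mdj :: "nat \<Rightarrow> (nat \<Rightarrow> int) \<Rightarrow> int mat" where
  "Mdj m d = mat m m (\<lambda>(k,l). if k = l then d k + 1 else 1)"

definition Fdj :: "nat \<Rightarrow> (nat \<Rightarrow> int) \<Rightarrow> int" where
  "Fdj m d = (\<Prod>k<m. d k) + (\<Sum>k<m. \<Prod>l<m. if l = k then 1 else d l)"

lemma Fdj_Suc: "Fdj (Suc m) d = d 0 * Fdj m (\<lambda>k. d (Suc k)) + (\<Prod>l<m. d (Suc l))"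
  unfolding Fdj_def
  by (simp add: prod.lessThan_Suc_shift sum.lessThan_Suc_shift sum_distrib_left algebra_simps
      del: prod.lessThan_Suc sum.lessThan_Suc)

lemma det_ones_row:
  fixes d :: "nat \<Rightarrow> int"
  assumes m: "m = Suc m'"
  shows "det (mat m m (\<lambda>(i,j). if i = 0 then 1 else if i = j then d i + 1 else 1)) = (\<Prod>l<m'. d (Suc l))"
proof -
  let ?B = "mat m m (\<lambda>(i,j). if i = 0 then 1 else if i = j then d i + 1 else (1::int))"
  let ?E = "mat m m (\<lambda>(i,j). if i = j then 1 else if j = 0 then -1 else (0::int))"
  let ?U = "mat m m (\<lambda>(i,j). if i = 0 then 1 else if i = j then d i else (0::int))"
  have detE: "det ?E = 1"
    by (subst det_lower_triangular[of m]) (auto simp: prod_list_diag_prod)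
  have EB: "?E * ?B = ?U"
  proof (rule eq_matI)
    fix i j assume ij: "i < dim_row ?U" "j < dim_col ?U"
    have "(?E * ?B) $$ (i,j) = (\<Sum>k\<in>{0..<m}. ?E $$ (i,k) * ?B $$ (k,j))"
      using ij by (simp add: scalar_prod_def)
    also have "\<dots> = (\<Sum>k\<in>{0..<m}. (if k = i then ?B $$ (k,j) else 0) + (if k = 0 \<and> i \<noteq> 0 then - ?B $$ (k,j) else 0))"
      using ij by (intro sum.cong) auto
    also have "\<dots> = ?B $$ (i,j) + (if i \<noteq> 0 then - ?B $$ (0,j) else 0)"
      using ij m by (simp add: sum.distrib)
    also have "\<dots> = ?U $$ (i,j)" using ij by auto
    finally show "(?E * ?B) $$ (i,j) = ?U $$ (i,j)" .
  qed auto
  have "det ?U = prod_list (diag_mat ?U)"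
    by (rule det_upper_triangular[of _ m]) auto
  also have "\<dots> = (\<Prod>i = 0..<m. ?U $$ (i,i))" by (simp add: prod_list_diag_prod)
  also have "\<dots> = (\<Prod>i<m. if i = 0 then 1 else d i)"
    unfolding atLeast0LessThan by (rule prod.cong) auto
  also have "\<dots> = (\<Prod>l<m'. d (Suc l))"
    using m by (simp add: prod.lessThan_Suc_shift del: prod.lessThan_Suc)
  finally have "det ?U = (\<Prod>l<m'. d (Suc l))" .
  moreover have "det (?E * ?B) = det ?E * det ?B"
    by (rule det_mult[of _ m]) auto
  ultimately show ?thesis using EB detE by simp
qed

lemma det_Mdj: "det (Mdj m d) = Fdj m d"
proof (induction m arbitrary: d)
  case 0
  show ?case unfolding Mdj_def Fdj_def by (simp add: det_dim_zero[of _])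
next
  case (Suc m')
  let ?m = "Suc m'"
  define a where "a = (\<lambda>i::nat. vec ?m (\<lambda>j. if j = 0 then d 0 else (0::int)))"
  define b where "b = (\<lambda>i::nat. vec ?m (\<lambda>j. (1::int)))"
  define c where "c = (\<lambda>i. vec ?m (\<lambda>j. if i = j then d i + 1 else (1::int)))"
  have M: "Mdj ?m d = mat\<^sub>r ?m ?m (\<lambda>i. if i = 0 then a i + b i else c i)"
    unfolding Mdj_def by (rule eq_matI) (auto simp: a_def b_def c_def)
  have "det (Mdj ?m d) = det (mat\<^sub>r ?m ?m (\<lambda>i. if i = 0 then a i else c i)) + det (mat\<^sub>r ?m ?m (\<lambda>i. if i = 0 then b i else c i))"
    unfolding M by (rule det_row_add) (auto simp: a_def b_def c_def)
  also have "det (mat\<^sub>r ?m ?m (\<lambda>i. if i = 0 then b i else c i)) = (\<Prod>l<m'. d (Suc l))"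
  proof -
    have "mat\<^sub>r ?m ?m (\<lambda>i. if i = 0 then b i else c i) = mat ?m ?m (\<lambda>(i,j). if i = 0 then 1 else if i = j then d i + 1 else 1)"
      by (rule eq_matI) (auto simp: b_def c_def)
    then show ?thesis using det_ones_row[of ?m m' d] by simp
  qed
  also have "det (mat\<^sub>r ?m ?m (\<lambda>i. if i = 0 then a i else c i)) = d 0 * Fdj m' (\<lambda>k. d (Suc k))"
  proof -
    let ?A = "mat\<^sub>r ?m ?m (\<lambda>i. if i = 0 then a i else c i)"
    have "det ?A = (\<Sum>j<?m. ?A $$ (0,j) * cofactor ?A 0 j)"
      by (rule laplace_expansion_row) auto
    also have "\<dots> = (\<Sum>j<?m. if j = 0 then d 0 * cofactor ?A 0 0 else 0)"
      by (rule sum.cong) (auto simp: a_def)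
    also have "\<dots> = d 0 * det (mat_delete ?A 0 0)"
      by (simp add: cofactor_def)
    also have "mat_delete ?A 0 0 = Mdj m' (\<lambda>k. d (Suc k))"
      unfolding Mdj_def mat_delete_def by (rule eq_matI) (auto simp: c_def)
    finally show ?thesis using Suc.IH by simp
  qed
  finally show ?case by (simp add: Fdj_Suc)
qed



definition eG :: "nat \<Rightarrow> (nat \<Rightarrow> nat \<Rightarrow> nat) \<Rightarrow> nat \<Rightarrow> nat" where
  "eG n a i = dA n a {i} i"

definition monoA :: "nat \<Rightarrow> (nat \<Rightarrow> nat \<Rightarrow> nat) \<Rightarrow> nat set \<Rightarrow> nat \<Rightarrow>\<^sub>0 nat" where
  "monoA n a A = (\<Sum>i\<in>A. Poly_Mapping.single i (dA n a A i))"

definition AdmA :: "nat \<Rightarrow> nat set set" where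
  "AdmA n = {A. A \<noteq> {} \<and> A \<subseteq> {1..n} \<and> card A \<le> 2}"

definition MsG :: "nat \<Rightarrow> (nat \<Rightarrow> nat \<Rightarrow> nat) \<Rightarrow> (nat \<Rightarrow>\<^sub>0 nat) set" where
  "MsG n a = monoA n a ` AdmA n"

lemma gens_eq: "skeleton1_gens n a = (\<lambda>m. Poly_Mapping.single m (1::'k::field)) ` MsG n a"
  unfolding skeleton1_gens_def MsG_def mA_def monoA_def AdmA_def by auto

lemma finite_MsG: "finite (MsG n a)"
proof -
  have "AdmA n \<subseteq> Pow {1..n}" unfolding AdmA_def by auto
  then have "finite (AdmA n)" by (rule finite_subset) simp
  then show ?thesis unfolding MsG_def by simp
qed

lemma dvd_pm: "(\<exists>c. b = c + m) \<longleftrightarrow> (\<forall>k. Poly_Mapping.lookup m k \<le> Poly_Mapping.lookup (b :: nat \<Rightarrow>\<^sub>0 nat) k)"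
proof
  assume "\<exists>c. b = c + m" then show "\<forall>k. Poly_Mapping.lookup m k \<le> Poly_Mapping.lookup b k"
    by (auto simp: lookup_add)
next
  assume h: "\<forall>k. Poly_Mapping.lookup m k \<le> Poly_Mapping.lookup b k"
  have "b = (b - m) + m" by (rule poly_mapping_eqI) (simp add: lookup_add lookup_minus h)
  then show "\<exists>c. b = c + m" by blast
qed

lemma lookup_monoA: "finite A \<Longrightarrow> Poly_Mapping.lookup (monoA n a A) k = (if k \<in> A then dA n a A k else 0)"
  unfolding monoA_def by (simp add: lookup_sum_single)

lemma AdmA_iff: "A \<in> AdmA n \<longleftrightarrow> (\<exists>i\<in>{1..n}. A = {i}) \<or> (\<exists>i\<in>{1..n}. \<exists>j\<in>{1..n}. i \<noteq> j \<and> A = {i,j})"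
proof
  assume A: "A \<in> AdmA n"
  then have fin: "finite A" unfolding AdmA_def using finite_subset by auto
  have "card A \<noteq> 0" using A fin unfolding AdmA_def by auto
  then have "card A = 1 \<or> card A = 2" using A unfolding AdmA_def by auto
  then show "(\<exists>i\<in>{1..n}. A = {i}) \<or> (\<exists>i\<in>{1..n}. \<exists>j\<in>{1..n}. i \<noteq> j \<and> A = {i,j})"
  proof
    assume "card A = 1" then obtain i where "A = {i}" using card_1_singleton_iff[of A] by auto
    then show ?thesis using A unfolding AdmA_def by auto
  next
    assume "card A = 2" then obtain i j where ij: "A = {i,j}" "i \<noteq> j" using card_2_iff[of A] by auto
    then have "i \<in> {1..n}" "j \<in> {1..n}" using A unfolding AdmA_def by auto
    then show ?thesis using ij by blast
  qed
next
  assume "(\<exists>i\<in>{1..n}. A = {i}) \<or> (\<exists>i\<in>{1..n}. \<exists>j\<in>{1..n}. i \<noteq> j \<and> A = {i,j})"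
  then show "A \<in> AdmA n" unfolding AdmA_def by auto
qed

lemma dA_pair:
  assumes off: "\<And>i j. i \<in> {1..n} \<Longrightarrow> j \<in> {1..n} \<Longrightarrow> i \<noteq> j \<Longrightarrow> a i j = 1"
    and ij: "i \<in> {1..n}" "j \<in> {1..n}" "i \<noteq> j"
  shows "dA n a {i,j} i = eG n a i - 1"
proof -
  have "{0..n} - {i,j} = ({0..n} - {i}) - {j}" by auto
  then have "dA n a {i,j} i = sum (a i) (({0..n} - {i}) - {j})" unfolding dA_def by simp
  also have "\<dots> = sum (a i) ({0..n} - {i}) - a i j" using ij by (subst sum_diff1_nat) auto
  finally show ?thesis using off[OF ij] unfolding eG_def dA_def by simp
qed

lemma std_iff:
  assumes off: "\<And>i j. i \<in> {1..n} \<Longrightarrow> j \<in> {1..n} \<Longrightarrow> i \<noteq> j \<Longrightarrow> a i j = 1"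
  shows "b \<in> stdm n (MsG n a) \<longleftrightarrow> Poly_Mapping.keys b \<subseteq> {1..n} \<and>
     (\<forall>i\<in>{1..n}. Poly_Mapping.lookup b i < eG n a i) \<and>
     (\<forall>i\<in>{1..n}. \<forall>j\<in>{1..n}. i \<noteq> j \<longrightarrow> \<not> (eG n a i - 1 \<le> Poly_Mapping.lookup b i \<and> eG n a j - 1 \<le> Poly_Mapping.lookup b j))"
proof -
  have div: "(\<exists>c. b = c + monoA n a A) \<longleftrightarrow> (\<forall>k\<in>A. dA n a A k \<le> Poly_Mapping.lookup b k)" if "A \<in> AdmA n" for A
  proof -
    have "finite A" using that unfolding AdmA_def using finite_subset by auto
    then show ?thesis unfolding dvd_pm by (auto simp: lookup_monoA split: if_splits)
  qed
  have e1: "(\<forall>m\<in>MsG n a. \<not> (\<exists>c. b = c + m)) \<longleftrightarrow> (\<forall>A\<in>AdmA n. \<not> (\<exists>c. b = c + monoA n a A))"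
    unfolding MsG_def by blast
  have e2: "(\<forall>A\<in>AdmA n. \<not> (\<exists>c. b = c + monoA n a A)) \<longleftrightarrow> (\<forall>A\<in>AdmA n. \<not> (\<forall>k\<in>A. dA n a A k \<le> Poly_Mapping.lookup b k))"
    by (rule ball_cong[OF refl]) (simp add: div)
  have "b \<in> stdm n (MsG n a) \<longleftrightarrow> Poly_Mapping.keys b \<subseteq> {1..n} \<and> (\<forall>A\<in>AdmA n. \<not> (\<forall>k\<in>A. dA n a A k \<le> Poly_Mapping.lookup b k))"
    unfolding stdm_def using e1 e2 by simp
  also have "(\<forall>A\<in>AdmA n. \<not> (\<forall>k\<in>A. dA n a A k \<le> Poly_Mapping.lookup b k)) \<longleftrightarrow>
     (\<forall>i\<in>{1..n}. Poly_Mapping.lookup b i < eG n a i) \<and>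
     (\<forall>i\<in>{1..n}. \<forall>j\<in>{1..n}. i \<noteq> j \<longrightarrow> \<not> (eG n a i - 1 \<le> Poly_Mapping.lookup b i \<and> eG n a j - 1 \<le> Poly_Mapping.lookup b j))"
  proof -
    have pair: "dA n a {i,j} j = eG n a j - 1" if "i \<in> {1..n}" "j \<in> {1..n}" "i \<noteq> j" for i j
      using dA_pair[where i=j and j=i, OF off] that by (simp add: insert_commute)
    let ?L = "Poly_Mapping.lookup b"
    show ?thesis
    proof
      assume H: "\<forall>A\<in>AdmA n. \<not> (\<forall>k\<in>A. dA n a A k \<le> ?L k)"
      have "?L i < eG n a i" if i: "i \<in> {1..n}" for i
      proof -
        have "{i} \<in> AdmA n" unfolding AdmA_iff using i by blast
        then show ?thesis using H unfolding eG_def by force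
      qed
      moreover have "\<not> (eG n a i - 1 \<le> ?L i \<and> eG n a j - 1 \<le> ?L j)"
        if ij: "i \<in> {1..n}" "j \<in> {1..n}" "i \<noteq> j" for i j
      proof -
        have "{i,j} \<in> AdmA n" unfolding AdmA_iff using ij by blast
        then have "\<not> (\<forall>k\<in>{i,j}. dA n a {i,j} k \<le> ?L k)" using H by blast
        then show ?thesis using dA_pair[OF off ij] pair[OF ij] by simp
      qed
      ultimately show "(\<forall>i\<in>{1..n}. ?L i < eG n a i) \<and>
        (\<forall>i\<in>{1..n}. \<forall>j\<in>{1..n}. i \<noteq> j \<longrightarrow> \<not> (eG n a i - 1 \<le> ?L i \<and> eG n a j - 1 \<le> ?L j))"
        by blast
    next
      assume H: "(\<forall>i\<in>{1..n}. ?L i < eG n a i) \<and>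
        (\<forall>i\<in>{1..n}. \<forall>j\<in>{1..n}. i \<noteq> j \<longrightarrow> \<not> (eG n a i - 1 \<le> ?L i \<and> eG n a j - 1 \<le> ?L j))"
      show "\<forall>A\<in>AdmA n. \<not> (\<forall>k\<in>A. dA n a A k \<le> ?L k)"
      proof
        fix A assume "A \<in> AdmA n"
        then consider (s) i where "i \<in> {1..n}" "A = {i}"
          | (p) i j where "i \<in> {1..n}" "j \<in> {1..n}" "i \<noteq> j" "A = {i,j}"
          unfolding AdmA_iff by blast
        then show "\<not> (\<forall>k\<in>A. dA n a A k \<le> ?L k)"
        proof cases
          case s
          then have "?L i < dA n a {i} i" using H unfolding eG_def by blast
          then show ?thesis using s by simp
        next
          case p
          then have "\<not> (eG n a i - 1 \<le> ?L i \<and> eG n a j - 1 \<le> ?L j)" using H by blast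
          then show ?thesis using p dA_pair[OF off p(1-3)] pair[OF p(1-3)] by simp
        qed
      qed
    qed
  qed
  finally show ?thesis .
qed


definition Pset :: "nat \<Rightarrow> (nat \<Rightarrow> nat) \<Rightarrow> (nat \<Rightarrow> nat) set" where
  "Pset n e = {f \<in> Pi\<^sub>E {1..n} (\<lambda>i. {..<e i}). \<forall>i\<in>{1..n}. \<forall>j\<in>{1..n}. i \<noteq> j \<longrightarrow> \<not> (e i - 1 \<le> f i \<and> e j - 1 \<le> f j)}"

lemma std_image:
  assumes off: "\<And>i j. i \<in> {1..n} \<Longrightarrow> j \<in> {1..n} \<Longrightarrow> i \<noteq> j \<Longrightarrow> a i j = 1"
  shows "inj_on (\<lambda>b. restrict (Poly_Mapping.lookup b) {1..n}) (stdm n (MsG n a))"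
    and "(\<lambda>b. restrict (Poly_Mapping.lookup b) {1..n}) ` stdm n (MsG n a) = Pset n (eG n a)"
proof -
  let ?phi = "\<lambda>b. restrict (Poly_Mapping.lookup b) {1..n}"
  show "inj_on ?phi (stdm n (MsG n a))"
  proof (rule inj_onI)
    fix b1 b2 assume b: "b1 \<in> stdm n (MsG n a)" "b2 \<in> stdm n (MsG n a)" "?phi b1 = ?phi b2"
    have k: "Poly_Mapping.keys b1 \<subseteq> {1..n}" "Poly_Mapping.keys b2 \<subseteq> {1..n}" using b(1,2) unfolding stdm_def by auto
    show "b1 = b2"
    proof (rule poly_mapping_eqI)
      fix k
      show "Poly_Mapping.lookup b1 k = Poly_Mapping.lookup b2 k"
      proof (cases "k \<in> {1..n}")
        case True then show ?thesis using fun_cong[OF b(3), of k] by simp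
      next
        case False
        then have "k \<notin> Poly_Mapping.keys b1" "k \<notin> Poly_Mapping.keys b2" using k by auto
        then show ?thesis by (simp add: in_keys_iff)
      qed
    qed
  qed
  show "?phi ` stdm n (MsG n a) = Pset n (eG n a)"
  proof
    show "?phi ` stdm n (MsG n a) \<subseteq> Pset n (eG n a)"
    proof
      fix f assume "f \<in> ?phi ` stdm n (MsG n a)"
      then obtain b where b: "b \<in> stdm n (MsG n a)" "f = ?phi b" by blast
      have lt: "\<forall>i\<in>{1..n}. Poly_Mapping.lookup b i < eG n a i"
        and pr: "\<forall>i\<in>{1..n}. \<forall>j\<in>{1..n}. i \<noteq> j \<longrightarrow> \<not> (eG n a i - 1 \<le> Poly_Mapping.lookup b i \<and> eG n a j - 1 \<le> Poly_Mapping.lookup b j)"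
        using b(1) std_iff[of n a b, OF off] by blast+
      show "f \<in> Pset n (eG n a)"
        unfolding Pset_def b(2) using lt pr by (auto simp: restrict_PiE_iff)
    qed
    show "Pset n (eG n a) \<subseteq> ?phi ` stdm n (MsG n a)"
    proof
      fix f assume f: "f \<in> Pset n (eG n a)"
      define g where "g = (\<lambda>i. if i \<in> {1..n} then f i else 0)"
      have fin: "finite {i. g i \<noteq> 0}" by (rule finite_subset[of _ "{1..n}"]) (auto simp: g_def)
      define b where "b = Abs_poly_mapping g"
      have lb: "Poly_Mapping.lookup b = g" unfolding b_def using fin by simp
      have "Poly_Mapping.keys b \<subseteq> {1..n} \<and>
     (\<forall>i\<in>{1..n}. Poly_Mapping.lookup b i < eG n a i) \<and>
     (\<forall>i\<in>{1..n}. \<forall>j\<in>{1..n}. i \<noteq> j \<longrightarrow> \<not> (eG n a i - 1 \<le> Poly_Mapping.lookup b i \<and> eG n a j - 1 \<le> Poly_Mapping.lookup b j))"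
        using f unfolding Pset_def by (auto simp: lb g_def in_keys_iff PiE_iff split: if_splits)
      then have "b \<in> stdm n (MsG n a)" using std_iff[of n a b, OF off] by blast
      moreover have "?phi b = f"
      proof -
        have fE: "f \<in> Pi\<^sub>E {1..n} (\<lambda>i. {..<eG n a i})" using f unfolding Pset_def by simp
        have "?phi b = restrict f {1..n}" unfolding lb g_def by (rule restrict_ext) simp
        then show ?thesis using fE by simp
      qed
      ultimately show "f \<in> ?phi ` stdm n (MsG n a)" by force
    qed
  qed
qed

lemma Pset_decomp:
  assumes pos: "\<And>i. i \<in> {1..n} \<Longrightarrow> e i \<ge> 1"
  shows "Pset n e = Pi\<^sub>E {1..n} (\<lambda>j. {..<e j - 1}) \<union> (\<Union>i\<in>{1..n}. Pi\<^sub>E {1..n} (\<lambda>j. if j = i then {e i - 1} else {..<e j - 1}))"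
proof
  show "Pset n e \<subseteq> Pi\<^sub>E {1..n} (\<lambda>j. {..<e j - 1}) \<union> (\<Union>i\<in>{1..n}. Pi\<^sub>E {1..n} (\<lambda>j. if j = i then {e i - 1} else {..<e j - 1}))"
  proof
    fix f assume f: "f \<in> Pset n e"
    then have fE: "f \<in> extensional {1..n}" and lt: "\<And>i. i \<in> {1..n} \<Longrightarrow> f i < e i"
      and pr: "\<And>i j. i \<in> {1..n} \<Longrightarrow> j \<in> {1..n} \<Longrightarrow> i \<noteq> j \<Longrightarrow> \<not> (e i - 1 \<le> f i \<and> e j - 1 \<le> f j)"
      unfolding Pset_def PiE_iff by auto
    show "f \<in> Pi\<^sub>E {1..n} (\<lambda>j. {..<e j - 1}) \<union> (\<Union>i\<in>{1..n}. Pi\<^sub>E {1..n} (\<lambda>j. if j = i then {e i - 1} else {..<e j - 1}))"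
    proof (cases "\<forall>j\<in>{1..n}. f j < e j - 1")
      case True then show ?thesis using fE by (auto simp: PiE_iff)
    next
      case False
      then obtain i where i: "i \<in> {1..n}" "\<not> f i < e i - 1" by blast
      then have fi: "f i = e i - 1" using lt[OF i(1)] pos[OF i(1)] by linarith
      have "f j < e j - 1" if "j \<in> {1..n}" "j \<noteq> i" for j
        using pr[OF i(1) that(1)] that(2) fi by auto
      then have "f \<in> Pi\<^sub>E {1..n} (\<lambda>j. if j = i then {e i - 1} else {..<e j - 1})"
        using fE fi by (auto simp: PiE_iff)
      then show ?thesis using i(1) by blast
    qed
  qed
  show "Pi\<^sub>E {1..n} (\<lambda>j. {..<e j - 1}) \<union> (\<Union>i\<in>{1..n}. Pi\<^sub>E {1..n} (\<lambda>j. if j = i then {e i - 1} else {..<e j - 1})) \<subseteq> Pset n e"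
  proof
    fix f assume "f \<in> Pi\<^sub>E {1..n} (\<lambda>j. {..<e j - 1}) \<union> (\<Union>i\<in>{1..n}. Pi\<^sub>E {1..n} (\<lambda>j. if j = i then {e i - 1} else {..<e j - 1}))"
    then show "f \<in> Pset n e"
    proof
      assume "f \<in> Pi\<^sub>E {1..n} (\<lambda>j. {..<e j - 1})"
      then show ?thesis unfolding Pset_def PiE_iff using pos by fastforce
    next
      assume "f \<in> (\<Union>i\<in>{1..n}. Pi\<^sub>E {1..n} (\<lambda>j. if j = i then {e i - 1} else {..<e j - 1}))"
      then obtain i where i: "i \<in> {1..n}" "f \<in> Pi\<^sub>E {1..n} (\<lambda>j. if j = i then {e i - 1} else {..<e j - 1})" by blast
      have fj: "f j \<in> (if j = i then {e i - 1} else {..<e j - 1})" if "j \<in> {1..n}" for j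
        using i(2) that unfolding PiE_iff by blast
      have lt: "f j < e j" if "j \<in> {1..n}" for j using fj[OF that] pos[OF that] by (cases "j = i") auto
      have B: "f j < e j - 1" if "j \<in> {1..n}" "j \<noteq> i" for j using fj[OF that(1)] that(2) by auto
      have C: "\<not> (e i' - 1 \<le> f i' \<and> e j' - 1 \<le> f j')" if "i' \<in> {1..n}" "j' \<in> {1..n}" "i' \<noteq> j'" for i' j'
      proof (cases "i' = i")
        case True
        then have "f j' < e j' - 1" using B that by auto
        then show ?thesis by simp
      next
        case False
        then have "f i' < e i' - 1" using B that by auto
        then show ?thesis by simp
      qed
      have ext: "f \<in> extensional {1..n}" using i(2) by (simp add: PiE_iff)
      show ?thesis unfolding Pset_def PiE_iff using ext lt C by auto
    qed
  qed
qed

lemma card_Pset: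
  assumes pos: "\<And>i. i \<in> {1..n} \<Longrightarrow> e i \<ge> 1"
  shows "card (Pset n e) = (\<Prod>j\<in>{1..n}. e j - 1) + (\<Sum>i\<in>{1..n}. \<Prod>j\<in>{1..n}. if j = i then 1 else e j - 1)"
proof -
  define Q0 where "Q0 = Pi\<^sub>E {1..n} (\<lambda>j. {..<e j - 1})"
  define Q where "Q = (\<lambda>i. Pi\<^sub>E {1..n} (\<lambda>j. if j = i then {e i - 1} else {..<e j - 1}))"
  have finQ: "finite (Q i)" for i unfolding Q_def by (rule finite_PiE) auto
  have cQ: "card (Q i) = (\<Prod>j\<in>{1..n}. if j = i then 1 else e j - 1)" for i
    unfolding Q_def by (subst card_PiE) (auto intro!: prod.cong)
  have disj1: "Q0 \<inter> (\<Union>i\<in>{1..n}. Q i) = {}"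
  proof -
    have "f \<notin> Q i" if "f \<in> Q0" "i \<in> {1..n}" for f i
    proof
      assume "f \<in> Q i"
      then have "\<forall>j\<in>{1..n}. f j \<in> (if j = i then {e i - 1} else {..<e j - 1})" unfolding Q_def PiE_iff by blast
      then have "f i \<in> (if i = i then {e i - 1} else {..<e i - 1})" using that(2) by blast
      then have "f i = e i - 1" by simp
      moreover have "f i < e i - 1" using that unfolding Q0_def PiE_iff by auto
      ultimately show False by simp
    qed
    then show ?thesis by blast
  qed
  have disj2: "\<forall>i\<in>{1..n}. \<forall>j\<in>{1..n}. i \<noteq> j \<longrightarrow> Q i \<inter> Q j = {}"
  proof (intro ballI impI)
    fix i j assume ij: "i \<in> {1..n}" "j \<in> {1..n}" "i \<noteq> j"
    have "f \<notin> Q j" if "f \<in> Q i" for f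
    proof
      assume "f \<in> Q j"
      then have "\<forall>k\<in>{1..n}. f k \<in> (if k = j then {e j - 1} else {..<e k - 1})" unfolding Q_def PiE_iff by blast
      then have "f i \<in> (if i = j then {e j - 1} else {..<e i - 1})" using ij(1) by blast
      then have "f i < e i - 1" using ij(3) by simp
      moreover have "\<forall>k\<in>{1..n}. f k \<in> (if k = i then {e i - 1} else {..<e k - 1})" using that unfolding Q_def PiE_iff by blast
      then have "f i \<in> (if i = i then {e i - 1} else {..<e i - 1})" using ij(1) by blast
      then have "f i = e i - 1" by simp
      ultimately show False by simp
    qed
    then show "Q i \<inter> Q j = {}" by blast
  qed
  have finQ0: "finite Q0" unfolding Q0_def by (rule finite_PiE) auto
  have dec: "Pset n e = Q0 \<union> (\<Union>i\<in>{1..n}. Q i)"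
    unfolding Q0_def Q_def by (rule Pset_decomp[OF pos])
  have "card (Pset n e) = card Q0 + card (\<Union>i\<in>{1..n}. Q i)"
    unfolding dec by (rule card_Un_disjoint) (use finQ0 finQ disj1 in auto)
  also have "card (\<Union>i\<in>{1..n}. Q i) = (\<Sum>i\<in>{1..n}. card (Q i))"
    by (rule card_UN_disjoint) (auto simp: finQ disj2)
  finally show ?thesis by (simp add: cQ card_PiE Q0_def)
qed



lemma eG_ge:
  assumes off: "\<And>i j. i \<in> {1..n} \<Longrightarrow> j \<in> {1..n} \<Longrightarrow> i \<noteq> j \<Longrightarrow> a i j = 1" and i: "i \<in> {1..n}"
  shows "n - 1 \<le> eG n a i"
proof -
  have "n - 1 = card ({1..n} - {i})" using i by simp
  also have "\<dots> = (\<Sum>j\<in>{1..n} - {i}. a i j)" using off i by simp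
  also have "\<dots> \<le> (\<Sum>j\<in>{0..n} - {i}. a i j)" by (rule sum_mono2) auto
  finally show ?thesis unfolding eG_def dA_def by simp
qed

lemma trunc_Q_eq:
  assumes off: "\<And>i j. i \<in> {1..n} \<Longrightarrow> j \<in> {1..n} \<Longrightarrow> i \<noteq> j \<Longrightarrow> a i j = 1"
    and diag: "\<And>i. i \<in> {1..n} \<Longrightarrow> a i i = 0"
  shows "trunc_Q n a = Mdj n (\<lambda>k. int (eG n a (Suc k)) - 1)"
proof (rule eq_matI)
  fix k l assume kl: "k < dim_row (Mdj n (\<lambda>k. int (eG n a (Suc k)) - 1))" "l < dim_col (Mdj n (\<lambda>k. int (eG n a (Suc k)) - 1))"
  then have k: "k < n" "l < n" unfolding Mdj_def by auto
  have s: "(\<Sum>j\<in>{0..n}. a (Suc k) j) = eG n a (Suc k)"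
  proof -
    have "(\<Sum>j\<in>{0..n}. a (Suc k) j) = a (Suc k) (Suc k) + (\<Sum>j\<in>{0..n} - {Suc k}. a (Suc k) j)"
      using k by (subst sum.remove[of _ "Suc k"]) auto
    then show ?thesis using diag[of "Suc k"] k unfolding eG_def dA_def by simp
  qed
  have "int (sum (a (Suc k)) {0..n}) = int (eG n a (Suc k))" by (simp only: s)
  then have s': "(\<Sum>j = 0..n. int (a (Suc k) j)) = int (eG n a (Suc k))" by simp
  show "trunc_Q n a $$ (k, l) = Mdj n (\<lambda>k. int (eG n a (Suc k)) - 1) $$ (k, l)"
    using k s' off[of "Suc k" "Suc l"] unfolding trunc_Q_def Mdj_def by auto
qed (auto simp: trunc_Q_def Mdj_def)

lemma Fdj_cong: "(\<And>k. k < n \<Longrightarrow> d k = d' k) \<Longrightarrow> Fdj n d = Fdj n d'"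
  unfolding Fdj_def by (intro arg_cong2[where f="(+)"] prod.cong sum.cong refl) auto

lemma reindex_formula:
  fixes c :: "nat \<Rightarrow> nat"
  shows "int ((\<Prod>j\<in>{1..n}. c j) + (\<Sum>i\<in>{1..n}. \<Prod>j\<in>{1..n}. if j = i then 1 else c j)) = Fdj n (\<lambda>k. int (c (Suc k)))"
proof -
  have S: "{1..n} = Suc ` {..<n}" by (simp add: image_Suc_lessThan)
  have "(\<Prod>j\<in>{1..n}. c j) = (\<Prod>k<n. c (Suc k))" unfolding S by (simp add: prod.reindex)
  moreover have "(\<Sum>i\<in>{1..n}. \<Prod>j\<in>{1..n}. if j = i then 1 else c j) = (\<Sum>k<n. \<Prod>l<n. if l = k then 1 else c (Suc l))"
    unfolding S by (simp add: prod.reindex sum.reindex)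
  ultimately show ?thesis unfolding Fdj_def by (auto simp: if_distrib[where f="of_nat :: nat \<Rightarrow> int"] intro!: sum.cong prod.cong)
qed

theorem proposition1:
  fixes n r :: nat
  assumes "n \<ge> 1" and "r \<le> n"
  shows "\<exists>N. quot_dim n (skeleton1_ideal n (Gnr n r) :: 'k::field mpoly set) = enat N
             \<and> int N = det (trunc_Q n (Gnr n r))"
proof -
  let ?a = "Gnr n r"
  let ?e = "eG n ?a"
  have off: "\<And>i j. i \<in> {1..n} \<Longrightarrow> j \<in> {1..n} \<Longrightarrow> i \<noteq> j \<Longrightarrow> ?a i j = 1"
    unfolding Gnr_def by auto
  have diag: "\<And>i. i \<in> {1..n} \<Longrightarrow> ?a i i = 0" unfolding Gnr_def by auto
  have finP: "finite (Pset n ?e)"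
    by (rule finite_subset[of _ "Pi\<^sub>E {1..n} (\<lambda>i. {..<?e i})"]) (auto simp: Pset_def intro!: finite_PiE)
  have "finite ((\<lambda>b. restrict (Poly_Mapping.lookup b) {1..n}) ` stdm n (MsG n ?a))"
    using std_image(2)[of n ?a, OF off] finP by simp
  then have finS: "finite (stdm n (MsG n ?a))"
    by (rule finite_imageD) (rule std_image(1)[of n ?a, OF off])
  have cardS: "card (stdm n (MsG n ?a)) = card (Pset n ?e)"
    using card_image[OF std_image(1)[of n ?a, OF off]] std_image(2)[of n ?a, OF off] by simp
  have qd: "quot_dim n (skeleton1_ideal n ?a :: 'k mpoly set) = enat (card (Pset n ?e))"
    unfolding skeleton1_ideal_def gens_eq cardS[symmetric] by (rule quot_dim_monomial[OF finite_MsG finS])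
  have dt: "det (trunc_Q n ?a) = Fdj n (\<lambda>k. int (?e (Suc k)) - 1)"
  proof -
    have "trunc_Q n ?a = Mdj n (\<lambda>k. int (?e (Suc k)) - 1)"
      by (rule trunc_Q_eq) (auto simp: Gnr_def)
    then show ?thesis by (simp add: det_Mdj)
  qed
  show ?thesis
  proof (cases "\<forall>i\<in>{1..n}. ?e i \<ge> 1")
    case True
    have "int (card (Pset n ?e)) = Fdj n (\<lambda>k. int (?e (Suc k) - 1))"
    proof -
      have "card (Pset n ?e) = (\<Prod>j\<in>{1..n}. ?e j - 1) + (\<Sum>i\<in>{1..n}. \<Prod>j\<in>{1..n}. if j = i then 1 else ?e j - 1)"
        by (rule card_Pset) (use True in auto)
      then show ?thesis using reindex_formula[of "\<lambda>j. ?e j - 1" n] by simp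
    qed
    also have "\<dots> = Fdj n (\<lambda>k. int (?e (Suc k)) - 1)"
    proof (rule Fdj_cong)
      fix k assume "k < n"
      then show "int (?e (Suc k) - 1) = int (?e (Suc k)) - 1"
        using True by (simp add: of_nat_diff)
    qed
    finally show ?thesis using qd dt by simp
  next
    case False
    then obtain i where i: "i \<in> {1..n}" "?e i = 0" by force
    have "n - 1 \<le> ?e i" by (rule eG_ge[OF off i(1)])
    then have n1: "n = 1" "i = 1" using i assms(1) by auto
    have "f \<notin> Pset n ?e" for f
    proof
      assume "f \<in> Pset n ?e"
      then have "f i \<in> {..<?e i}" using i(1) unfolding Pset_def PiE_iff by blast
      then show False using i(2) by simp
    qed
    then have "Pset n ?e = {}" by blast
    moreover have "Fdj n (\<lambda>k. int (?e (Suc k)) - 1) = 0"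
      using n1 i by (simp add: Fdj_def)
    ultimately show ?thesis using qd dt by simp
  qed
qed

end
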